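(* For every integer $n\ge1$ and every $f:\{0,1\}^n\times\{0,1\}^n\to\{0,1\}$, $$\log_2\chi^{\mathrm{geom}}(f)\;\le\; C^{\mathrm{comp}}(f)\;\le\; 2\lceil\log_2\chi^{\mathrm{geom}}(f)\rceil .$$ In particular $C^{\mathrm{comp}}(f)=\Theta(\log\chi^{\mathrm{geom}}(f))$ with absolute implied constants.
   Context: Order $\{0,1\}^n$ lexicographically (equivalently, by the integer with that binary representation). A geometric rectangle is a subset of $\{0,1\}^n\times\{0,1\}^n$ of the form $[a_1,a_2]\times[b_1,b_2]$, where $[a_1,a_2]=\{a: a_1\le a\le a_2\}$ is an interval in this order. It is $f$-monochromatic if $f$ is constant on it. $\chi^{\mathrm{geom}}(f)$ is the minimum number of nonempty $f$-monochromatic geometric rectangles in a partition of $\{0,1\}^n\times\{0,1\}^n$. For $x\in\{0,1\}^n$, $\theta_x(y)=1$ iff $y\ge x$. A comparison communication protocol is a rooted binary tree each of whose internal vertices $v$ is assigned to either Alice or Bob and labeled by a function $g_v:\{0,1\}^n\to\{0,1\}$ which is either some $\theta_{x_v}$ or the constant $0$ function, with outgoing edges labeled $0$ and $1$; leaves are labeled by outputs in $\{0,1\}$. On input $(a,b)$ one starts at the root and at each internal vertex $v$ follows the edge labeled $g_v(a)$ if $v$ is Alice's and $g_v(b)$ if $v$ is Bob's. The protocol computes $f$ if the leaf reached on every input is labeled $f(a,b)$. Its cost is its depth; $C^{\mathrm{comp}}(f)$ is the minimum cost of a comparison communication protocol computing $f$. *)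

theory Defs
  imports Complex_Main
begin

text \<open>Strings in {0,1}^n are identified with the integers 0..2^n-1 they
represent in binary; the lexicographic order is then the usual order on nat.\<close>

definition cube :: "nat \<Rightarrow> nat set" where
  "cube n = {0..<2^n}"

definition geom_rect :: "nat \<Rightarrow> (nat \<times> nat) set \<Rightarrow> bool" where
  "geom_rect n R \<longleftrightarrow> (\<exists>a1 a2 b1 b2. a1 \<le> a2 \<and> a2 < 2^n \<and> b1 \<le> b2 \<and> b2 < 2^n
       \<and> R = {a1..a2} \<times> {b1..b2})"

definition monochromatic :: "(nat \<Rightarrow> nat \<Rightarrow> bool) \<Rightarrow> (nat \<times> nat) set \<Rightarrow> bool" where
  "monochromatic f R \<longleftrightarrow> (\<exists>c. \<forall>(a,b)\<in>R. f a b = c)"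

definition geom_partition :: "nat \<Rightarrow> (nat \<Rightarrow> nat \<Rightarrow> bool) \<Rightarrow> (nat \<times> nat) set set \<Rightarrow> bool" where
  "geom_partition n f P \<longleftrightarrow> finite P
     \<and> (\<forall>R\<in>P. R \<noteq> {} \<and> geom_rect n R \<and> monochromatic f R)
     \<and> (\<forall>R\<in>P. \<forall>S\<in>P. R \<noteq> S \<longrightarrow> R \<inter> S = {})
     \<and> \<Union>P = cube n \<times> cube n"

definition chi_geom :: "nat \<Rightarrow> (nat \<Rightarrow> nat \<Rightarrow> bool) \<Rightarrow> nat" where
  "chi_geom n f = (LEAST k. \<exists>P. geom_partition n f P \<and> card P = k)"

text \<open>A node's function is either theta_x (Some x) or the
constant 0 function (None). The first subtree is the 0-edge, the second the 1-edge.
Outputs 0/1 are represented by False/True.\<close>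
datatype player = Alice | Bob

datatype protocol = Leaf bool | Node player "nat option" protocol protocol

fun gval :: "nat option \<Rightarrow> nat \<Rightarrow> bool" where
  "gval None y = False"
| "gval (Some x) y = (x \<le> y)"

fun run :: "protocol \<Rightarrow> nat \<Rightarrow> nat \<Rightarrow> bool" where
  "run (Leaf c) a b = c"
| "run (Node p g t0 t1) a b =
     (if gval g (case p of Alice \<Rightarrow> a | Bob \<Rightarrow> b) then run t1 a b else run t0 a b)"

fun depth :: "protocol \<Rightarrow> nat" where
  "depth (Leaf c) = 0"
| "depth (Node p g t0 t1) = Suc (max (depth t0) (depth t1))"

fun wf_protocol :: "nat \<Rightarrow> protocol \<Rightarrow> bool" where
  "wf_protocol n (Leaf c) = True"
| "wf_protocol n (Node p g t0 t1) =
     ((\<forall>x. g = Some x \<longrightarrow> x < 2^n) \<and> wf_protocol n t0 \<and> wf_protocol n t1)"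

definition computes :: "nat \<Rightarrow> protocol \<Rightarrow> (nat \<Rightarrow> nat \<Rightarrow> bool) \<Rightarrow> bool" where
  "computes n T f \<longleftrightarrow> wf_protocol n T \<and> (\<forall>a\<in>cube n. \<forall>b\<in>cube n. run T a b = f a b)"

definition C_comp :: "nat \<Rightarrow> (nat \<Rightarrow> nat \<Rightarrow> bool) \<Rightarrow> nat" where
  "C_comp n f = (LEAST d. \<exists>T. computes n T f \<and> depth T = d)"

end

theory Submission
  imports Defs
begin

section \<open>Binary search protocols\<close>

function bs :: "player \<Rightarrow> nat list \<Rightarrow> (nat \<Rightarrow> protocol) \<Rightarrow> protocol" where
  "bs p [] k = Leaf False"
| "bs p [x] k = k x"
| "bs p (x # y # zs) k =
     Node p (Some (hd (drop (length (x#y#zs) div 2) (x#y#zs))))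
       (bs p (take (length (x#y#zs) div 2) (x#y#zs)) k)
       (bs p (drop (length (x#y#zs) div 2) (x#y#zs)) k)"
  by pat_completeness auto
termination
  by (relation "measure (\<lambda>(p,xs,k). length xs)") auto

lemma bs_step:
  assumes "length xs \<ge> 2"
  shows "bs p xs k = Node p (Some (hd (drop (length xs div 2) xs)))
       (bs p (take (length xs div 2) xs) k) (bs p (drop (length xs div 2) xs) k)"
proof -
  obtain x y zs where xs: "xs = x # y # zs" using assms
    by (metis Suc_le_length_iff numeral_2_eq_2)
  show ?thesis unfolding xs by (simp only: bs.simps)
qed

lemma bs_depth:
  "length xs \<le> 2^c \<Longrightarrow> (\<forall>t\<in>set xs. depth (k t) \<le> D) \<Longrightarrow> depth (bs p xs k) \<le> c + D"
proof (induction p xs k arbitrary: c rule: bs.induct)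
  case (1 p k)
  then show ?case by simp
next
  case (2 p x k)
  then show ?case by simp
next
  case (3 p x y zs k)
  define xs where "xs = x # y # zs"
  define h where "h = length xs div 2"
  have len: "length xs \<ge> 2" unfolding xs_def by simp
  have IH1: "\<And>c. length (take h xs) \<le> 2^c \<Longrightarrow> \<forall>t\<in>set (take h xs). depth (k t) \<le> D \<Longrightarrow>
     depth (bs p (take h xs) k) \<le> c + D" using 3(1) unfolding h_def xs_def by blast
  have IH2: "\<And>c. length (drop h xs) \<le> 2^c \<Longrightarrow> \<forall>t\<in>set (drop h xs). depth (k t) \<le> D \<Longrightarrow>
     depth (bs p (drop h xs) k) \<le> c + D" using 3(2) unfolding h_def xs_def by blast
  have A: "length xs \<le> 2^c" and B: "\<forall>t\<in>set xs. depth (k t) \<le> D"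
    using 3(3,4) unfolding xs_def by auto
  have c1: "c \<ge> 1"
  proof (rule ccontr)
    assume "\<not> c \<ge> 1" then have "c = 0" by simp
    then show False using A len by simp
  qed
  then obtain c' where c': "c = Suc c'" by (cases c) auto
  have l1: "length (take h xs) \<le> 2^c'" using A c' unfolding h_def by auto
  have l2: "length (drop h xs) \<le> 2^c'" using A c' unfolding h_def by auto
  have s1: "\<forall>t\<in>set (take h xs). depth (k t) \<le> D" using B
    by (meson in_set_takeD)
  have s2: "\<forall>t\<in>set (drop h xs). depth (k t) \<le> D" using B
    by (meson in_set_dropD)
  have "depth (bs p xs k) = Suc (max (depth (bs p (take h xs) k)) (depth (bs p (drop h xs) k)))"
    using bs_step[OF len] unfolding h_def by simp
  then show ?case using IH1[OF l1 s1] IH2[OF l2 s2] c' unfolding xs_def by simp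
qed

lemma bs_wf:
  "(\<forall>t\<in>set xs. t < 2^n) \<Longrightarrow> (\<forall>t\<in>set xs. wf_protocol n (k t)) \<Longrightarrow> wf_protocol n (bs p xs k)"
proof (induction p xs k rule: bs.induct)
  case (3 p x y zs k)
  define xs where "xs = x # y # zs"
  define h where "h = length xs div 2"
  have len: "length xs \<ge> 2" unfolding xs_def by simp
  have IH1: "wf_protocol n (bs p (take h xs) k)" using 3 unfolding h_def xs_def[symmetric]
    by (meson in_set_takeD)
  have IH2: "wf_protocol n (bs p (drop h xs) k)" using 3 unfolding h_def xs_def[symmetric]
    by (meson in_set_dropD)
  have ne: "drop h xs \<noteq> []" unfolding h_def using len by simp
  then have "hd (drop h xs) \<in> set xs"
    by (meson hd_in_set in_set_dropD)
  then have "hd (drop h xs) < 2^n" using 3(3) unfolding xs_def by blast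
  then have "wf_protocol n (bs p xs k)"
    using bs_step[OF len] IH1 IH2 unfolding h_def by simp
  then show ?case unfolding xs_def .
qed auto

lemma bs_run:
  "sorted xs \<Longrightarrow> xs \<noteq> [] \<Longrightarrow> hd xs \<le> (case p of Alice \<Rightarrow> a | Bob \<Rightarrow> b) \<Longrightarrow>
   \<exists>t\<in>set xs. t \<le> (case p of Alice \<Rightarrow> a | Bob \<Rightarrow> b)
     \<and> (\<forall>t'\<in>set xs. t' \<le> (case p of Alice \<Rightarrow> a | Bob \<Rightarrow> b) \<longrightarrow> t' \<le> t)
     \<and> run (bs p xs k) a b = run (k t) a b"
proof (induction p xs k rule: bs.induct)
  case (1 p k)
  then show ?case by simp
next
  case (2 p x k)
  then show ?case by auto
next
  case (3 p x y zs k)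
  define v where "v = (case p of Alice \<Rightarrow> a | Bob \<Rightarrow> b)"
  define xs where "xs = x # y # zs"
  define h where "h = length xs div 2"
  define l where "l = take h xs"
  define r where "r = drop h xs"
  have len: "length xs \<ge> 2" unfolding xs_def by simp
  have IH1: "sorted l \<Longrightarrow> l \<noteq> [] \<Longrightarrow> hd l \<le> v \<Longrightarrow>
     \<exists>t\<in>set l. t \<le> v \<and> (\<forall>t'\<in>set l. t' \<le> v \<longrightarrow> t' \<le> t) \<and> run (bs p l k) a b = run (k t) a b"
    using 3(1) unfolding l_def h_def xs_def v_def by blast
  have IH2: "sorted r \<Longrightarrow> r \<noteq> [] \<Longrightarrow> hd r \<le> v \<Longrightarrow>
     \<exists>t\<in>set r. t \<le> v \<and> (\<forall>t'\<in>set r. t' \<le> v \<longrightarrow> t' \<le> t) \<and> run (bs p r k) a b = run (k t) a b"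
    using 3(2) unfolding r_def h_def xs_def v_def by blast
  have sxs: "sorted xs" and hxs: "hd xs \<le> v" using 3(3,5) unfolding xs_def v_def by auto
  have xne: "xs \<noteq> []" using len by (cases xs) auto
  have lne: "l \<noteq> []" unfolding l_def h_def using len xne by (simp add: take_eq_Nil)
  have rne: "r \<noteq> []" unfolding r_def h_def using len by simp
  have xslr: "xs = l @ r" unfolding l_def r_def by simp
  have sl: "sorted l" and sr: "sorted r" and lr: "\<forall>u\<in>set l. \<forall>w\<in>set r. u \<le> w"
    using sxs xslr by (metis sorted_append)+
  have hdl: "hd l = hd xs" using lne xslr by simp
  have run_eq: "run (bs p xs k) a b = (if hd r \<le> v then run (bs p r k) a b else run (bs p l k) a b)"
    unfolding bs_step[OF len] l_def r_def h_def v_def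
    by (cases p) auto
  have goal: "\<exists>t\<in>set xs. t \<le> v \<and> (\<forall>t'\<in>set xs. t' \<le> v \<longrightarrow> t' \<le> t) \<and> run (bs p xs k) a b = run (k t) a b"
  proof (cases "hd r \<le> v")
    case True
    from IH2 sr rne True
    obtain t where t: "t\<in>set r" "t \<le> v" "\<forall>t'\<in>set r. t' \<le> v \<longrightarrow> t' \<le> t"
      "run (bs p r k) a b = run (k t) a b" by blast
    have "hd r \<le> t" using t(3) True rne by simp
    then have "\<forall>t'\<in>set xs. t' \<le> v \<longrightarrow> t' \<le> t" using t(3) lr xslr rne
      by (metis Un_iff hd_in_set le_trans set_append)
    moreover have "t \<in> set xs" using t(1) xslr by simp
    ultimately show ?thesis using t run_eq True by auto
  next
    case False
    have hl: "hd l \<le> v" using hdl hxs by simp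
    from IH1 sl lne hl
    obtain t where t: "t\<in>set l" "t \<le> v" "\<forall>t'\<in>set l. t' \<le> v \<longrightarrow> t' \<le> t"
      "run (bs p l k) a b = run (k t) a b" by blast
    have "\<forall>t'\<in>set r. \<not> t' \<le> v"
    proof
      fix t' assume "t' \<in> set r"
      then have "hd r \<le> t'" using sr rne
        by (metis list.collapse set_ConsD sorted_simps(2) order.refl)
      then show "\<not> t' \<le> v" using False by simp
    qed
    then have "\<forall>t'\<in>set xs. t' \<le> v \<longrightarrow> t' \<le> t" using t(3) xslr by auto
    moreover have "t \<in> set xs" using t(1) xslr by simp
    ultimately show ?thesis using t run_eq False by auto
  qed
  then show ?case unfolding xs_def v_def .
qed


section \<open>Leaf regions of a protocol\<close>

fun parts :: "protocol \<Rightarrow> nat set \<Rightarrow> nat set \<Rightarrow> (nat \<times> nat) set set" where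
  "parts (Leaf c) I J = {I \<times> J}"
| "parts (Node Alice g t0 t1) I J = parts t0 {a\<in>I. \<not> gval g a} J \<union> parts t1 {a\<in>I. gval g a} J"
| "parts (Node Bob g t0 t1) I J = parts t0 I {b\<in>J. \<not> gval g b} \<union> parts t1 I {b\<in>J. gval g b}"

definition isint :: "nat set \<Rightarrow> bool" where
  "isint S \<longleftrightarrow> (\<exists>l u. S = {l..u})"

lemma isint_filter:
  assumes "isint I"
  shows "isint {a\<in>I. gval g a} \<and> isint {a\<in>I. \<not> gval g a}"
proof -
  obtain l u where I: "I = {l..u}" using assms unfolding isint_def by blast
  show ?thesis
  proof (cases g)
    case None
    have e1: "{a\<in>I. gval g a} = {1..0}" using None by auto
    have e2: "{a\<in>I. \<not> gval g a} = I" using None by auto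
    show ?thesis unfolding e1 e2 using assms unfolding isint_def by blast
  next
    case (Some x)
    have "{a\<in>I. gval g a} = {max l x..u}" using Some I by auto
    moreover have "{a\<in>I. \<not> gval g a} = (if x = 0 then {1..0} else {l..min u (x-1)})"
      using Some I by auto
    ultimately show ?thesis unfolding isint_def by (metis (no_types, lifting))
  qed
qed

lemma parts_card: "finite (parts T I J) \<and> card (parts T I J) \<le> 2 ^ depth T"
proof (induction T I J rule: parts.induct)
  case (1 c I J)
  then show ?case by simp
next
  case (2 g t0 t1 I J)
  let ?A = "parts t0 {a\<in>I. \<not> gval g a} J" and ?B = "parts t1 {a\<in>I. gval g a} J"
  have "card (?A \<union> ?B) \<le> card ?A + card ?B" by (rule card_Un_le)
  also have "\<dots> \<le> 2 ^ depth t0 + 2 ^ depth t1" using 2 by (simp add: add_mono)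
  also have "\<dots> \<le> 2 ^ max (depth t0) (depth t1) + 2 ^ max (depth t0) (depth t1)"
    by (intro add_mono power_increasing) auto
  finally show ?case using 2 by simp
next
  case (3 g t0 t1 I J)
  let ?A = "parts t0 I {b\<in>J. \<not> gval g b}" and ?B = "parts t1 I {b\<in>J. gval g b}"
  have "card (?A \<union> ?B) \<le> card ?A + card ?B" by (rule card_Un_le)
  also have "\<dots> \<le> 2 ^ depth t0 + 2 ^ depth t1" using 3 by (simp add: add_mono)
  also have "\<dots> \<le> 2 ^ max (depth t0) (depth t1) + 2 ^ max (depth t0) (depth t1)"
    by (intro add_mono power_increasing) auto
  finally show ?case using 3 by simp
qed

lemma parts_union: "\<Union> (parts T I J) = I \<times> J"
  by (induction T I J rule: parts.induct) auto

lemma parts_sub: "R \<in> parts T I J \<Longrightarrow> R \<subseteq> I \<times> J"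
  using parts_union by blast

lemma parts_shape:
  "R \<in> parts T I J \<Longrightarrow> \<exists>I' J'. R = I' \<times> J' \<and> I' \<subseteq> I \<and> J' \<subseteq> J
      \<and> (isint I \<longrightarrow> isint I') \<and> (isint J \<longrightarrow> isint J')
      \<and> (\<exists>c. \<forall>a\<in>I'. \<forall>b\<in>J'. run T a b = c)"
proof (induction T I J arbitrary: R rule: parts.induct)
  case (1 c I J)
  then show ?case by auto
next
  case (2 g t0 t1 I J)
  from 2(3) have "R \<in> parts t0 {a\<in>I. \<not> gval g a} J \<union> parts t1 {a\<in>I. gval g a} J" by simp
  then show ?case
  proof (elim UnE)
    assume "R \<in> parts t0 {a\<in>I. \<not> gval g a} J"
    from 2(1)[OF this] obtain I' J' c where
      h: "R = I' \<times> J'" "I' \<subseteq> {a\<in>I. \<not> gval g a}" "J' \<subseteq> J"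
      "isint {a\<in>I. \<not> gval g a} \<longrightarrow> isint I'" "isint J \<longrightarrow> isint J'"
      "\<forall>a\<in>I'. \<forall>b\<in>J'. run t0 a b = c" by blast
    have cc: "\<forall>a\<in>I'. \<forall>b\<in>J'. run (Node Alice g t0 t1) a b = c" using h(2,6) by auto
    have ii: "isint I \<longrightarrow> isint I'" using h(4) isint_filter[of I g] by blast
    have ss: "I' \<subseteq> I" using h(2) by blast
    show ?thesis by (rule exI[of _ I'], rule exI[of _ J']) (use h(1,3,5) ii cc ss in blast)
  next
    assume "R \<in> parts t1 {a\<in>I. gval g a} J"
    from 2(2)[OF this] obtain I' J' c where
      h: "R = I' \<times> J'" "I' \<subseteq> {a\<in>I. gval g a}" "J' \<subseteq> J"
      "isint {a\<in>I. gval g a} \<longrightarrow> isint I'" "isint J \<longrightarrow> isint J'"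
      "\<forall>a\<in>I'. \<forall>b\<in>J'. run t1 a b = c" by blast
    have cc: "\<forall>a\<in>I'. \<forall>b\<in>J'. run (Node Alice g t0 t1) a b = c" using h(2,6) by auto
    have ii: "isint I \<longrightarrow> isint I'" using h(4) isint_filter[of I g] by blast
    have ss: "I' \<subseteq> I" using h(2) by blast
    show ?thesis by (rule exI[of _ I'], rule exI[of _ J']) (use h(1,3,5) ii cc ss in blast)
  qed
next
  case (3 g t0 t1 I J)
  from 3(3) have "R \<in> parts t0 I {b\<in>J. \<not> gval g b} \<union> parts t1 I {b\<in>J. gval g b}" by simp
  then show ?case
  proof (elim UnE)
    assume "R \<in> parts t0 I {b\<in>J. \<not> gval g b}"
    from 3(1)[OF this] obtain I' J' c where
      h: "R = I' \<times> J'" "I' \<subseteq> I" "J' \<subseteq> {b\<in>J. \<not> gval g b}"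
      "isint I \<longrightarrow> isint I'" "isint {b\<in>J. \<not> gval g b} \<longrightarrow> isint J'"
      "\<forall>a\<in>I'. \<forall>b\<in>J'. run t0 a b = c" by blast
    have cc: "\<forall>a\<in>I'. \<forall>b\<in>J'. run (Node Bob g t0 t1) a b = c" using h(3,6) by auto
    have ii: "isint J \<longrightarrow> isint J'" using h(5) isint_filter[of J g] by blast
    have ss: "J' \<subseteq> J" using h(3) by blast
    show ?thesis by (rule exI[of _ I'], rule exI[of _ J']) (use h(1,2,4) ii cc ss in blast)
  next
    assume "R \<in> parts t1 I {b\<in>J. gval g b}"
    from 3(2)[OF this] obtain I' J' c where
      h: "R = I' \<times> J'" "I' \<subseteq> I" "J' \<subseteq> {b\<in>J. gval g b}"
      "isint I \<longrightarrow> isint I'" "isint {b\<in>J. gval g b} \<longrightarrow> isint J'"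
      "\<forall>a\<in>I'. \<forall>b\<in>J'. run t1 a b = c" by blast
    have cc: "\<forall>a\<in>I'. \<forall>b\<in>J'. run (Node Bob g t0 t1) a b = c" using h(3,6) by auto
    have ii: "isint J \<longrightarrow> isint J'" using h(5) isint_filter[of J g] by blast
    have ss: "J' \<subseteq> J" using h(3) by blast
    show ?thesis by (rule exI[of _ I'], rule exI[of _ J']) (use h(1,2,4) ii cc ss in blast)
  qed
qed

lemma parts_disj: "R \<in> parts T I J \<Longrightarrow> S \<in> parts T I J \<Longrightarrow> R \<noteq> S \<Longrightarrow> R \<inter> S = {}"
proof (induction T I J arbitrary: R S rule: parts.induct)
  case (1 c I J)
  then show ?case by simp
next
  case (2 g t0 t1 I J)
  have d: "R \<inter> S = {}" if "R \<in> parts t0 {a\<in>I. \<not> gval g a} J" "S \<in> parts t1 {a\<in>I. gval g a} J" for R S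
    using parts_sub[OF that(1)] parts_sub[OF that(2)] by blast
  from 2(3,4) have "R \<in> parts t0 {a\<in>I. \<not> gval g a} J \<union> parts t1 {a\<in>I. gval g a} J"
    "S \<in> parts t0 {a\<in>I. \<not> gval g a} J \<union> parts t1 {a\<in>I. gval g a} J" by simp_all
  then show ?case using 2(1)[of R S] 2(2)[of R S] 2(5) d[of R S] d[of S R] by blast
next
  case (3 g t0 t1 I J)
  have d: "R \<inter> S = {}" if "R \<in> parts t0 I {b\<in>J. \<not> gval g b}" "S \<in> parts t1 I {b\<in>J. gval g b}" for R S
    using parts_sub[OF that(1)] parts_sub[OF that(2)] by blast
  from 3(3,4) have "R \<in> parts t0 I {b\<in>J. \<not> gval g b} \<union> parts t1 I {b\<in>J. gval g b}"
    "S \<in> parts t0 I {b\<in>J. \<not> gval g b} \<union> parts t1 I {b\<in>J. gval g b}" by simp_all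
  then show ?case using 3(1)[of R S] 3(2)[of R S] 3(5) d[of R S] d[of S R] by blast
qed

lemma protocol_partition:
  assumes "computes n T f"
  shows "\<exists>P. geom_partition n f P \<and> card P \<le> 2 ^ depth T"
proof -
  let ?Q = "parts T (cube n) (cube n)"
  define P where "P = ?Q - {{}}"
  have fin: "finite ?Q" and cQ: "card ?Q \<le> 2 ^ depth T" using parts_card by blast+
  have "card P \<le> card ?Q" unfolding P_def using fin by (simp add: card_mono)
  with cQ have cP: "card P \<le> 2 ^ depth T" by simp
  obtain m where m: "(2::nat)^n = Suc m" using not0_implies_Suc[of "(2::nat)^n"] by auto
  have ic: "isint (cube n)" unfolding isint_def cube_def m
    by (rule exI[of _ 0], rule exI[of _ m]) auto
  have rects: "R \<noteq> {} \<and> geom_rect n R \<and> monochromatic f R" if "R \<in> P" for R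
  proof -
    have R: "R \<in> ?Q" "R \<noteq> {}" using that unfolding P_def by auto
    obtain I' J' c where h: "R = I' \<times> J'" "I' \<subseteq> cube n" "J' \<subseteq> cube n" "isint I'" "isint J'"
      "\<forall>a\<in>I'. \<forall>b\<in>J'. run T a b = c" using parts_shape[OF R(1)] ic by blast
    obtain a1 a2 where I': "I' = {a1..a2}" using h(4) unfolding isint_def by blast
    obtain b1 b2 where J': "J' = {b1..b2}" using h(5) unfolding isint_def by blast
    have ne: "a1 \<le> a2" "b1 \<le> b2" using R(2) h(1) I' J' by auto
    have "a2 \<in> cube n" "b2 \<in> cube n" using h(2,3) I' J' ne by auto
    then have lt: "a2 < 2^n" "b2 < 2^n" unfolding cube_def by auto
    have "geom_rect n R" unfolding geom_rect_def using ne lt h(1) I' J' by blast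
    moreover have "monochromatic f R" unfolding monochromatic_def
    proof (rule exI[of _ c], clarify)
      fix a b assume "(a, b) \<in> R"
      then have "a \<in> I'" "b \<in> J'" using h(1) by auto
      then show "f a b = c" using h assms unfolding computes_def by (metis subsetD)
    qed
    ultimately show ?thesis using R(2) by blast
  qed
  have "geom_partition n f P" unfolding geom_partition_def
  proof (intro conjI)
    show "finite P" unfolding P_def using fin by simp
    show "\<forall>R\<in>P. R \<noteq> {} \<and> geom_rect n R \<and> monochromatic f R" using rects by blast
    show "\<forall>R\<in>P. \<forall>S\<in>P. R \<noteq> S \<longrightarrow> R \<inter> S = {}" unfolding P_def using parts_disj by blast
    show "\<Union>P = cube n \<times> cube n" unfolding P_def using parts_union[of T "cube n" "cube n"] by blast
  qed
  then show ?thesis using cP by blast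
qed


lemma log_aux1: "(k::nat) \<ge> 1 \<Longrightarrow> k \<le> 2 ^ nat \<lceil>log 2 (real k)\<rceil>"
  by (meson less_log2_of_power linorder_not_le of_nat_ceiling)

lemma log_aux2: "(k::nat) \<le> 2 ^ d \<Longrightarrow> log 2 (real k) \<le> real d"
  using log2_of_power_le log_def by fastforce

lemma sorted_hd_le: "sorted xs \<Longrightarrow> t \<in> set xs \<Longrightarrow> hd xs \<le> t"
  by (cases xs) auto

lemma partition_exists: "\<exists>P. geom_partition n f P"
proof -
  define P where "P = (\<lambda>(a,b). {(a,b)}) ` (cube n \<times> cube n)"
  have "geom_partition n f P" unfolding geom_partition_def
  proof (intro conjI)
    show "finite P" unfolding P_def cube_def by simp
    show "\<forall>R\<in>P. R \<noteq> {} \<and> geom_rect n R \<and> monochromatic f R"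
    proof
      fix R assume "R \<in> P"
      then obtain a b where ab: "a \<in> cube n" "b \<in> cube n" "R = {(a,b)}" unfolding P_def by auto
      have e: "R = {a..a} \<times> {b..b}" using ab by auto
      have lt: "a < 2^n" "b < 2^n" using ab unfolding cube_def by auto
      have "geom_rect n R" unfolding geom_rect_def
        by (rule exI[of _ a], rule exI[of _ a], rule exI[of _ b], rule exI[of _ b]) (use e lt in simp)
      moreover have "monochromatic f R" unfolding monochromatic_def using ab by auto
      ultimately show "R \<noteq> {} \<and> geom_rect n R \<and> monochromatic f R" using ab by auto
    qed
    show "\<forall>R\<in>P. \<forall>S\<in>P. R \<noteq> S \<longrightarrow> R \<inter> S = {}" unfolding P_def by auto
    show "\<Union>P = cube n \<times> cube n" unfolding P_def by auto
  qed
  then show ?thesis by blast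
qed

lemma upper_protocol:
  assumes P: "geom_partition n f P" and cP: "card P \<le> 2 ^ c"
  shows "\<exists>T. computes n T f \<and> depth T \<le> c + c"
proof -
  have finP: "finite P" and rP: "\<forall>R\<in>P. R \<noteq> {} \<and> geom_rect n R \<and> monochromatic f R"
    and uP: "\<Union>P = cube n \<times> cube n" using P unfolding geom_partition_def by auto
  define A where "A = (\<lambda>R. Min (fst ` R)) ` P"
  define B where "B = (\<lambda>R. Min (snd ` R)) ` P"
  have shape: "\<exists>a1 a2 b1 b2. a1 \<le> a2 \<and> a2 < 2^n \<and> b1 \<le> b2 \<and> b2 < 2^n \<and> R = {a1..a2} \<times> {b1..b2}
      \<and> Min (fst ` R) = a1 \<and> Min (snd ` R) = b1" if "R \<in> P" for R
  proof -
    have "geom_rect n R" using rP that by blast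
    then obtain a1 a2 b1 b2 where h: "a1 \<le> a2" "a2 < 2^n" "b1 \<le> b2" "b2 < 2^n" "R = {a1..a2} \<times> {b1..b2}"
      unfolding geom_rect_def by blast
    have "fst ` R = {a1..a2}" "snd ` R = {b1..b2}" using h by auto
    then have "Min (fst ` R) = a1" "Min (snd ` R) = b1" using h by (auto intro!: Min_eqI)
    then show ?thesis using h by blast
  qed
  have finA1: "finite A" unfolding A_def using finP by simp
  have "card A \<le> card P" unfolding A_def using finP by (rule card_image_le)
  then have finA: "finite A" "card A \<le> 2^c" using cP finA1 by auto
  have finB1: "finite B" unfolding B_def using finP by simp
  have "card B \<le> card P" unfolding B_def using finP by (rule card_image_le)
  then have finB: "finite B" "card B \<le> 2^c" using cP finB1 by auto
  have Alt: "\<forall>t\<in>A. t < 2^n"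
  proof
    fix t assume "t \<in> A"
    then obtain R where R: "R \<in> P" "t = Min (fst ` R)" unfolding A_def by blast
    from shape[OF R(1)] obtain a1 a2 where "a1 \<le> a2" "a2 < 2^n" "Min (fst ` R) = a1" by blast
    then show "t < 2^n" using R(2) by simp
  qed
  have Blt: "\<forall>t\<in>B. t < 2^n"
  proof
    fix t assume "t \<in> B"
    then obtain R where R: "R \<in> P" "t = Min (snd ` R)" unfolding B_def by blast
    from shape[OF R(1)] obtain b1 b2 where "b1 \<le> b2" "b2 < 2^n" "Min (snd ` R) = b1" by blast
    then show "t < 2^n" using R(2) by simp
  qed
  have c00: "(0,0) \<in> cube n \<times> cube n" unfolding cube_def by simp
  then obtain R0 where R0: "R0 \<in> P" "(0,0) \<in> R0" using uP by blast
  obtain a1 a2 b1 b2 where h0: "R0 = {a1..a2} \<times> {b1..b2}" "Min (fst ` R0) = a1" "Min (snd ` R0) = b1"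
    using shape[OF R0(1)] by blast
  have "a1 = 0" "b1 = 0" using R0(2) h0(1) by auto
  then have A0: "Min (fst ` R0) \<in> A" "Min (fst ` R0) = 0" and B0: "Min (snd ` R0) \<in> B" "Min (snd ` R0) = 0"
    unfolding A_def B_def using R0(1) h0 \<open>a1 = 0\<close> \<open>b1 = 0\<close> by (metis image_eqI)+
  define xsA where "xsA = sorted_list_of_set A"
  define xsB where "xsB = sorted_list_of_set B"
  have sA: "sorted xsA" "set xsA = A" "length xsA = card A" unfolding xsA_def using finA by auto
  have sB: "sorted xsB" "set xsB = B" "length xsB = card B" unfolding xsB_def using finB by auto
  have neA: "xsA \<noteq> []" using sA A0 by auto
  have neB: "xsB \<noteq> []" using sB B0 by auto
  have hA: "hd xsA = 0" using sorted_hd_le[OF sA(1), of 0] sA A0 by auto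
  have hB: "hd xsB = 0" using sorted_hd_le[OF sB(1), of 0] sB B0 by auto
  define T where "T = bs Alice xsA (\<lambda>\<alpha>. bs Bob xsB (\<lambda>\<beta>. Leaf (f \<alpha> \<beta>)))"
  have inner: "depth (bs Bob xsB (\<lambda>\<beta>. Leaf (f \<alpha> \<beta>))) \<le> c + 0" for \<alpha>
    by (rule bs_depth) (use sB finB in simp_all)
  have dT: "depth T \<le> c + (c + 0)" unfolding T_def
    by (rule bs_depth) (use sA finA inner in simp_all)
  have innerw: "wf_protocol n (bs Bob xsB (\<lambda>\<beta>. Leaf (f \<alpha> \<beta>)))" for \<alpha>
    by (rule bs_wf) (use sB Blt in simp_all)
  have wT: "wf_protocol n T" unfolding T_def
    by (rule bs_wf) (use sA Alt innerw in simp_all)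
  have rT: "run T a b = f a b" if ab: "a \<in> cube n" "b \<in> cube n" for a b
  proof -
    obtain t where t: "t \<in> A" "t \<le> a" "\<forall>t'\<in>A. t' \<le> a \<longrightarrow> t' \<le> t"
      "run T a b = run (bs Bob xsB (\<lambda>\<beta>. Leaf (f t \<beta>))) a b"
      using bs_run[OF sA(1) neA, where p=Alice and a=a and b=b and k="\<lambda>\<alpha>. bs Bob xsB (\<lambda>\<beta>. Leaf (f \<alpha> \<beta>))"] hA sA(2)
      unfolding T_def by auto
    obtain u where u: "u \<in> B" "u \<le> b" "\<forall>t'\<in>B. t' \<le> b \<longrightarrow> t' \<le> u"
      "run (bs Bob xsB (\<lambda>\<beta>. Leaf (f t \<beta>))) a b = f t u"
      using bs_run[OF sB(1) neB, where p=Bob and a=a and b=b and k="\<lambda>\<beta>. Leaf (f t \<beta>)"] hB sB(2) by auto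
    obtain R where R: "R \<in> P" "(a,b) \<in> R" using uP ab by blast
    obtain a1 a2 b1 b2 where h: "R = {a1..a2} \<times> {b1..b2}" "Min (fst ` R) = a1" "Min (snd ` R) = b1"
      using shape[OF R(1)] by blast
    have "a1 \<in> A" "b1 \<in> B" using R(1) h(2,3) unfolding A_def B_def by (metis image_eqI)+
    moreover have "a1 \<le> a" "a \<le> a2" "b1 \<le> b" "b \<le> b2" using R(2) h(1) by auto
    ultimately have "a1 \<le> t" "b1 \<le> u" using t(3) u(3) by auto
    then have "(t,u) \<in> R" using h(1) t(2) u(2) \<open>a \<le> a2\<close> \<open>b \<le> b2\<close> by auto
    moreover have "monochromatic f R" using rP R(1) by blast
    then obtain cc where cc: "\<forall>(x,y)\<in>R. f x y = cc" unfolding monochromatic_def by blast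
    ultimately have "f t u = cc" "f a b = cc" using R(2) cc by auto
    then have "f t u = f a b" by simp
    then show ?thesis using t(4) u(4) by simp
  qed
  have "computes n T f" unfolding computes_def using wT rT by blast
  moreover have "depth T \<le> c + c" using dT by simp
  ultimately show ?thesis by blast
qed

theorem mainTheorem8:
  fixes n :: nat and f :: "nat \<Rightarrow> nat \<Rightarrow> bool"
  assumes "n \<ge> 1"
  shows "log 2 (real (chi_geom n f)) \<le> real (C_comp n f)
       \<and> real (C_comp n f) \<le> 2 * real_of_int \<lceil>log 2 (real (chi_geom n f))\<rceil>"
proof -
  have ex: "\<exists>k P. geom_partition n f P \<and> card P = k" using partition_exists by blast
  obtain P where P: "geom_partition n f P" "card P = chi_geom n f"
    using LeastI_ex[OF ex] unfolding chi_geom_def by blast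
  define k where "k = chi_geom n f"
  have k1: "k \<ge> 1"
  proof (rule ccontr)
    assume "\<not> k \<ge> 1"
    then have "card P = 0" using P k_def by simp
    moreover have "finite P" "\<Union>P = cube n \<times> cube n" using P(1) unfolding geom_partition_def by auto
    ultimately have "cube n \<times> cube n = {}" by simp
    moreover have "(0,0) \<in> cube n \<times> cube n" unfolding cube_def by simp
    ultimately show False by simp
  qed
  define c where "c = nat \<lceil>log 2 (real k)\<rceil>"
  have kc: "k \<le> 2^c" unfolding c_def using log_aux1[OF k1] .
  obtain T where T: "computes n T f" "depth T \<le> c + c"
    using upper_protocol[OF P(1)] kc P(2) k_def by auto
  have ex2: "\<exists>d T. computes n T f \<and> depth T = d" using T by blast
  have "C_comp n f \<le> depth T" unfolding C_comp_def
    by (rule Least_le) (use T in blast)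
  then have Cle: "C_comp n f \<le> c + c" using T(2) by simp
  obtain T0 where T0: "computes n T0 f" "depth T0 = C_comp n f"
    using LeastI_ex[OF ex2] unfolding C_comp_def by blast
  obtain P0 where P0: "geom_partition n f P0" "card P0 \<le> 2 ^ depth T0"
    using protocol_partition[OF T0(1)] by blast
  have "k \<le> card P0" unfolding k_def chi_geom_def
    using Least_le[of "\<lambda>k. \<exists>P. geom_partition n f P \<and> card P = k" "card P0"] P0(1) by auto
  then have "k \<le> 2 ^ C_comp n f" using P0(2) T0(2) by simp
  then have lo: "log 2 (real k) \<le> real (C_comp n f)" by (rule log_aux2)
  have "log 2 (real k) \<ge> 0" using k1 by simp
  then have "real c = real_of_int \<lceil>log 2 (real k)\<rceil>" unfolding c_def by simp
  then have up: "real (C_comp n f) \<le> 2 * real_of_int \<lceil>log 2 (real k)\<rceil>" using Cle by linarith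
  show ?thesis using lo up unfolding k_def by simp
qed

end
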